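(* Let $\mathcal{S}$ be a category with $\Delta_1^*\subset\mathcal{S}\subset\mathbf{Pos}$ subcategories and $\Delta_1^*$ wide in $\mathcal{S}$. The following are equivalent: (1) every $\mathcal{S}$-morphism maps each $1$-dimensional interval onto an interval; (2) $\mathcal{S}$ does not contain the diagonal $[1]\to[1]^2$, $x\mapsto(x,x)$.
   Context: $[1]=\{0<1\}$, $[1]^n$ the product poset with componentwise order ($[1]^0=[0]$). An interval in a poset $P$ is a non-empty subset $[x,z]_P=\{y:x\leq y\leq z\}$; a $1$-dimensional interval in $[1]^n$ is one isomorphic to $[1]$, i.e. $\{x,y\}$ with $x<y$ differing in exactly one coordinate. $\Delta_1^*$ is the smallest subcategory of $\mathbf{Set}$ containing all functions between $[0]$ and $[1]$ and closed under Cartesian products of functions; its objects are the $[1]^n$ and it is generated by cofaces and codegeneracies (coordinate projections). "Wide" means $\mathcal{S}$ has the same objects as $\Delta_1^*$. $\mathbf{Pos}$ is the category of posets and monotone functions. *)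

theory Defs
  imports Main
begin

text \<open>The cube [1]^n is represented by boolean lists of length n (False < True),
  ordered componentwise.\<close>

definition cube :: "nat \<Rightarrow> bool list set" where
  "cube n = {xs. length xs = n}"

definition cleq :: "bool list \<Rightarrow> bool list \<Rightarrow> bool" where
  "cleq xs ys \<longleftrightarrow> list_all2 (\<le>) xs ys"

definition maps_cube :: "nat \<Rightarrow> nat \<Rightarrow> (bool list \<Rightarrow> bool list) \<Rightarrow> bool" where
  "maps_cube m n f \<longleftrightarrow> (\<forall>x\<in>cube m. f x \<in> cube n)"

definition mono_cube :: "nat \<Rightarrow> (bool list \<Rightarrow> bool list) \<Rightarrow> bool" where
  "mono_cube m f \<longleftrightarrow> (\<forall>x\<in>cube m. \<forall>y\<in>cube m. cleq x y \<longrightarrow> cleq (f x) (f y))"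

text \<open>Two functions represent the same morphism out of [1]^m.\<close>
definition agree :: "nat \<Rightarrow> (bool list \<Rightarrow> bool list) \<Rightarrow> (bool list \<Rightarrow> bool list) \<Rightarrow> bool" where
  "agree m f g \<longleftrightarrow> (\<forall>x\<in>cube m. f x = g x)"

text \<open>Delta_1^*: the smallest subcategory containing the (monotone) maps between [0] and [1]
  and closed under Cartesian products of maps ([1]^a x [1]^c identified with [1]^(a+c)
  by concatenation).\<close>
inductive delta1star :: "nat \<Rightarrow> nat \<Rightarrow> (bool list \<Rightarrow> bool list) \<Rightarrow> bool" where
  gen: "a \<le> 1 \<Longrightarrow> b \<le> 1 \<Longrightarrow> maps_cube a b f \<Longrightarrow> mono_cube a f \<Longrightarrow> delta1star a b f"
| ident: "delta1star n n id"
| comp: "delta1star m n f \<Longrightarrow> delta1star n k g \<Longrightarrow> delta1star m k (g \<circ> f)"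
| prod: "delta1star a b f \<Longrightarrow> delta1star c d g \<Longrightarrow>
          delta1star (a + c) (b + d) (\<lambda>xs. f (take a xs) @ g (drop a xs))"

text \<open>S (a wide subcategory of Pos on the objects [1]^n) given by a predicate on
  hom-sets; functions are considered only on their domain cube.\<close>
definition cube_cat :: "(nat \<Rightarrow> nat \<Rightarrow> (bool list \<Rightarrow> bool list) \<Rightarrow> bool) \<Rightarrow> bool" where
  "cube_cat S \<longleftrightarrow>
     (\<forall>m n f. S m n f \<longrightarrow> maps_cube m n f \<and> mono_cube m f) \<and>
     (\<forall>m n k f g. S m n f \<longrightarrow> S n k g \<longrightarrow> (\<exists>h. S m k h \<and> agree m h (g \<circ> f))) \<and>
     (\<forall>m n f. delta1star m n f \<longrightarrow> (\<exists>g. S m n g \<and> agree m g f))"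

definition one_dim_interval :: "nat \<Rightarrow> bool list \<Rightarrow> bool list \<Rightarrow> bool" where
  "one_dim_interval m x y \<longleftrightarrow> x \<in> cube m \<and> y \<in> cube m \<and> cleq x y \<and> x \<noteq> y \<and>
     card {i. i < m \<and> x ! i \<noteq> y ! i} = 1"

definition is_interval :: "nat \<Rightarrow> bool list set \<Rightarrow> bool" where
  "is_interval n A \<longleftrightarrow> (\<exists>a\<in>cube n. \<exists>c\<in>cube n. cleq a c \<and>
      A = {b\<in>cube n. cleq a b \<and> cleq b c})"

end

theory Submission
  imports Defs
begin

lemma d_cong: "delta1star a b f \<Longrightarrow> a = a' \<Longrightarrow> b = b' \<Longrightarrow> f = f' \<Longrightarrow> delta1star a' b' f'"
  by simp

lemma d_const: "delta1star 0 (length c) (\<lambda>_. c)"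
proof (induction c)
  case Nil
  show ?case by (rule delta1star.gen) (auto simp: maps_cube_def mono_cube_def cube_def cleq_def)
next
  case (Cons b c)
  have g: "delta1star 0 1 (\<lambda>_. [b])"
    by (rule delta1star.gen) (auto simp: maps_cube_def mono_cube_def cube_def cleq_def)
  show ?case by (rule d_cong[OF delta1star.prod[OF g Cons.IH]]) auto
qed

lemma d_erase: "delta1star a 0 (\<lambda>_. [])"
proof (induction a)
  case 0
  show ?case using d_const[of "[]"] by simp
next
  case (Suc a)
  have g: "delta1star 1 0 (\<lambda>_. [])"
    by (rule delta1star.gen) (auto simp: maps_cube_def mono_cube_def cube_def cleq_def)
  show ?case by (rule d_cong[OF delta1star.prod[OF g Suc.IH]]) auto
qed

lemma d_ins: "delta1star 1 (length p + 1 + length d) (\<lambda>xs. p @ take 1 xs @ d)"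
proof -
  have P: "delta1star (1+0) (1 + length d) (\<lambda>xs. id (take 1 xs) @ (\<lambda>_. d) (drop 1 xs))"
    by (rule delta1star.prod[OF delta1star.ident d_const])
  show ?thesis by (rule d_cong[OF delta1star.prod[OF d_const[of p] P]]) auto
qed

lemma take1_drop: "i < length xs \<Longrightarrow> take 1 (drop i xs) = [xs ! i]"
  by (simp add: Cons_nth_drop_Suc[symmetric])

lemma d_proj:
  assumes "i < j" "j < n"
  shows "\<exists>g. delta1star n 2 g \<and> agree n g (\<lambda>xs. [xs!i, xs!j])"
proof -
  define e2 where "e2 = j - i - 1"
  define e3 where "e3 = n - j - 1"
  have P: "delta1star (1+e3) (1+0) (\<lambda>xs. id (take 1 xs) @ (\<lambda>_. []) (drop 1 xs))"
    by (rule delta1star.prod[OF delta1star.ident d_erase])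
  have Q: "delta1star (e2 + (1+e3)) (0+(1+0)) (\<lambda>xs. (\<lambda>_. []) (take e2 xs) @ (\<lambda>xs. id (take 1 xs) @ (\<lambda>_. []) (drop 1 xs)) (drop e2 xs))"
    by (rule delta1star.prod[OF d_erase P])
  have R: "delta1star (1 + (e2 + (1+e3))) (1+(0+(1+0))) (\<lambda>xs. id (take 1 xs) @ (\<lambda>xs. (\<lambda>_. []) (take e2 xs) @ (\<lambda>xs. id (take 1 xs) @ (\<lambda>_. []) (drop 1 xs)) (drop e2 xs)) (drop 1 xs))"
    by (rule delta1star.prod[OF delta1star.ident Q])
  have T: "delta1star (i + (1 + (e2 + (1+e3)))) (0 + (1+(0+(1+0)))) (\<lambda>xs. (\<lambda>_. []) (take i xs) @ (\<lambda>xs. id (take 1 xs) @ (\<lambda>xs. (\<lambda>_. []) (take e2 xs) @ (\<lambda>xs. id (take 1 xs) @ (\<lambda>_. []) (drop 1 xs)) (drop e2 xs)) (drop 1 xs)) (drop i xs))"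
    by (rule delta1star.prod[OF d_erase R])
  have n: "i + (1 + (e2 + (1+e3))) = n" using assms by (simp add: e2_def e3_def)
  show ?thesis
  proof (intro exI conjI)
    show "delta1star n 2 (\<lambda>xs. take 1 (drop i xs) @ take 1 (drop e2 (drop 1 (drop i xs))))"
      by (rule d_cong[OF T n]) auto
    show "agree n (\<lambda>xs. take 1 (drop i xs) @ take 1 (drop e2 (drop 1 (drop i xs)))) (\<lambda>xs. [xs!i, xs!j])"
      unfolding agree_def
    proof
      fix xs assume "xs \<in> cube n"
      then have l: "length xs = n" by (simp add: cube_def)
      have "drop e2 (drop 1 (drop i xs)) = drop j xs" using assms by (simp add: e2_def)
      then show "take 1 (drop i xs) @ take 1 (drop e2 (drop 1 (drop i xs))) = [xs!i, xs!j]"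
        using assms l take1_drop[of i xs] take1_drop[of j xs] by simp
    qed
  qed
qed

lemma cleq_nth: "cleq xs ys \<longleftrightarrow> length xs = length ys \<and> (\<forall>i<length xs. xs!i \<le> ys!i)"
  by (simp add: cleq_def list_all2_conv_all_nth)

theorem mainTheorem6:
  fixes S :: "nat \<Rightarrow> nat \<Rightarrow> (bool list \<Rightarrow> bool list) \<Rightarrow> bool"
  assumes "cube_cat S"
  shows "(\<forall>m n f. S m n f \<longrightarrow>
            (\<forall>x y. one_dim_interval m x y \<longrightarrow> is_interval n (f ` {x, y})))
         \<longleftrightarrow> \<not> (\<exists>f. S 1 2 f \<and> agree 1 f (\<lambda>x. x @ x))"
proof -
  note A = assms[unfolded cube_cat_def]
  have Smc: "\<And>m n f. S m n f \<Longrightarrow> maps_cube m n f \<and> mono_cube m f" using A by blast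
  have Scomp: "\<And>m n k f g. S m n f \<Longrightarrow> S n k g \<Longrightarrow> \<exists>h. S m k h \<and> agree m h (g \<circ> f)" using A by blast
  have Sd: "\<And>m n f. delta1star m n f \<Longrightarrow> \<exists>g. S m n g \<and> agree m g f" using A by blast
  show ?thesis
  proof
    assume H: "\<forall>m n f. S m n f \<longrightarrow> (\<forall>x y. one_dim_interval m x y \<longrightarrow> is_interval n (f ` {x, y}))"
    show "\<not> (\<exists>f. S 1 2 f \<and> agree 1 f (\<lambda>x. x @ x))"
    proof
      assume "\<exists>f. S 1 2 f \<and> agree 1 f (\<lambda>x. x @ x)"
      then obtain f where f: "S 1 2 f" "agree 1 f (\<lambda>x. x @ x)" by blast
      have "{i. i < (1::nat) \<and> [False] ! i \<noteq> [True] ! i} = {0}" by auto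
      then have "one_dim_interval 1 [False] [True]"
        by (simp add: one_dim_interval_def cube_def cleq_def)
      with H f(1) have I: "is_interval 2 (f ` {[False], [True]})" by blast
      have "f [False] = [False, False]" "f [True] = [True, True]"
        using f(2) by (auto simp: agree_def cube_def)
      then have "f ` {[False], [True]} = {[False, False], [True, True]}" by auto
      with I have I2: "is_interval 2 {[False, False], [True, True]}" by simp
      then obtain a c where ac: "a \<in> cube 2" "c \<in> cube 2"
        "{[False, False], [True, True]} = {b\<in>cube 2. cleq a b \<and> cleq b c}"
        unfolding is_interval_def by (elim bexE conjE) (rule that)
      have "[False,False] \<in> {b\<in>cube 2. cleq a b \<and> cleq b c}" "[True,True] \<in> {b\<in>cube 2. cleq a b \<and> cleq b c}"
        using ac(3) by blast+
      then have "cleq a [False,False]" "cleq [True,True] c" by auto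
      then have "cleq a [False,True] \<and> cleq [False,True] c"
        by (auto simp: cleq_def list_all2_Cons2 list_all2_Cons1)
      then have "[False,True] \<in> {b\<in>cube 2. cleq a b \<and> cleq b c}" by (simp add: cube_def)
      then have "[False,True] \<in> {[False, False], [True, True]}" by (subst ac(3))
      then show False by simp
    qed
  next
    assume N: "\<not> (\<exists>f. S 1 2 f \<and> agree 1 f (\<lambda>x. x @ x))"
    show "\<forall>m n f. S m n f \<longrightarrow> (\<forall>x y. one_dim_interval m x y \<longrightarrow> is_interval n (f ` {x, y}))"
    proof (intro allI impI, rule ccontr)
      fix m n f x y
      assume Sf: "S m n f" and od: "one_dim_interval m x y" and ni: "\<not> is_interval n (f ` {x, y})"
      have xm: "x \<in> cube m" and ym: "y \<in> cube m" and xy: "cleq x y"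
        and cd: "card {i. i < m \<and> x ! i \<noteq> y ! i} = 1"
        using od by (auto simp: one_dim_interval_def)
      obtain k where k: "{i. i < m \<and> x ! i \<noteq> y ! i} = {k}" using cd card_1_singletonE by blast
      have km: "k < m" and kd: "x ! k \<noteq> y ! k" and oth: "\<And>i. i < m \<Longrightarrow> i \<noteq> k \<Longrightarrow> x ! i = y ! i"
        using k by blast+
      have lx: "length x = m" "length y = m" using xm ym by (auto simp: cube_def)
      have "x ! k \<le> y ! k" using xy km lx by (simp add: cleq_nth)
      with kd have xk: "x ! k = False" "y ! k = True" by auto
      have fxn: "f x \<in> cube n" "f y \<in> cube n" using Smc[OF Sf] xm ym by (auto simp: maps_cube_def)
      have fxy: "cleq (f x) (f y)" using Smc[OF Sf] xm ym xy by (auto simp: mono_cube_def)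
      have lf: "length (f x) = n" "length (f y) = n" using fxn by (auto simp: cube_def)
      define D where "D = {i. i < n \<and> f x ! i \<noteq> f y ! i}"
      have "\<exists>i j. i < j \<and> j < n \<and> f x ! i \<noteq> f y ! i \<and> f x ! j \<noteq> f y ! j"
      proof (rule ccontr)
        assume nn: "\<not> ?thesis"
        have "is_interval n (f ` {x, y})"
        proof (cases "D = {}")
          case True
          then have "f x = f y" using lf by (auto simp: D_def intro: nth_equalityI)
          have "{b\<in>cube n. cleq (f x) b \<and> cleq b (f y)} = {f x}"
          proof safe
            fix b assume "b \<in> cube n" "cleq (f x) b" "cleq b (f y)"
            then have lb: "length b = n" by (simp add: cube_def)
            have "\<And>i. i < n \<Longrightarrow> b ! i = f x ! i"
            proof -
              fix i assume "i < n"
              then have "f x ! i \<le> b ! i" "b ! i \<le> f y ! i"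
                using \<open>cleq (f x) b\<close> \<open>cleq b (f y)\<close> lf lb by (auto simp: cleq_nth)
              then show "b ! i = f x ! i" using \<open>f x = f y\<close> by (simp add: order_antisym)
            qed
            then show "b = f x" using lb lf by (simp add: nth_equalityI)
          qed (use fxn fxy \<open>f x = f y\<close> in auto)
          then show ?thesis unfolding is_interval_def using fxn fxy \<open>f x = f y\<close> by auto
        next
          case False
          then obtain k' where k': "k' \<in> D" by blast
          have oth': "\<And>i. i < n \<Longrightarrow> i \<noteq> k' \<Longrightarrow> f x ! i = f y ! i"
          proof -
            fix i assume "i < n" "i \<noteq> k'"
            show "f x ! i = f y ! i"
            proof (rule ccontr)
              assume "f x ! i \<noteq> f y ! i"
              moreover have "k' < n" "f x ! k' \<noteq> f y ! k'" using k' unfolding D_def by auto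
              ultimately show False using nn \<open>i < n\<close> \<open>i \<noteq> k'\<close>
                by (cases "i < k'") (blast, meson nat_neq_iff)
            qed
          qed
          have "{b\<in>cube n. cleq (f x) b \<and> cleq b (f y)} = f ` {x, y}"
          proof safe
            fix b assume b: "b \<in> cube n" "cleq (f x) b" "cleq b (f y)"
            have lb: "length b = n" using b by (simp add: cube_def)
            have eq: "\<And>i. i < n \<Longrightarrow> i \<noteq> k' \<Longrightarrow> b ! i = f x ! i"
            proof -
              fix i assume i: "i < n" "i \<noteq> k'"
              then have "f x ! i \<le> b ! i" "b ! i \<le> f y ! i"
                using b lf lb by (auto simp: cleq_nth)
              then show "b ! i = f x ! i" using oth'[OF i] by (simp add: order_antisym)
            qed
            show "b \<in> f ` {x, y}"
            proof (cases "b ! k' = f x ! k'")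
              case True
              then have all: "\<forall>i<n. b ! i = f x ! i" using eq by metis
              then have "b = f x" using lb lf by (intro nth_equalityI) auto
              then show ?thesis by auto
            next
              case False
              then have "b ! k' = f y ! k'" using k' unfolding D_def by auto
              then have all: "\<forall>i<n. b ! i = f y ! i" using eq oth' by metis
              then have "b = f y" using lb lf by (intro nth_equalityI) auto
              then show ?thesis by auto
            qed
          qed (use fxn fxy in \<open>auto simp: cleq_nth\<close>)
          then show ?thesis unfolding is_interval_def using fxn fxy by metis
        qed
        with ni show False by simp
      qed
      then obtain i j where ij: "i < j" "j < n" "f x ! i \<noteq> f y ! i" "f x ! j \<noteq> f y ! j" by blast
      have "f x ! i \<le> f y ! i" "f x ! j \<le> f y ! j" using fxy ij lf by (auto simp: cleq_nth)
      with ij have fv: "f x ! i = False" "f y ! i = True" "f x ! j = False" "f y ! j = True" by auto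
      define ins where "ins = (\<lambda>xs::bool list. take k x @ take 1 xs @ drop (Suc k) x)"
      have "delta1star 1 m ins"
        using d_ins[of "take k x" "drop (Suc k) x"] km lx unfolding ins_def by simp
      then obtain g where g: "S 1 m g" "agree 1 g ins" using Sd by blast
      obtain p0 where p0: "delta1star n 2 p0" "agree n p0 (\<lambda>xs. [xs!i, xs!j])" using d_proj[OF ij(1,2)] by blast
      then obtain p where p: "S n 2 p" "agree n p p0" using Sd by blast
      obtain h1 where h1: "S 1 n h1" "agree 1 h1 (f \<circ> g)" using Scomp[OF g(1) Sf] by blast
      obtain h where h: "S 1 2 h" "agree 1 h (p \<circ> h1)" using Scomp[OF h1(1) p(1)] by blast
      have insF: "ins [False] = x"
      proof -
        have "ins [False] = x[k := False]" unfolding ins_def using km lx by (simp add: upd_conv_take_nth_drop)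
        also have "\<dots> = x" using xk(1) by (metis list_update_id)
        finally show ?thesis .
      qed
      have insT: "ins [True] = y"
      proof -
        have "ins [True] = x[k := True]" unfolding ins_def using km lx by (simp add: upd_conv_take_nth_drop)
        also have "\<dots> = y"
        proof (rule nth_equalityI)
          show "length (x[k := True]) = length y" using lx by simp
          fix i assume "i < length (x[k := True])"
          then show "x[k := True] ! i = y ! i" using km lx oth xk by (cases "i = k") auto
        qed
        finally show ?thesis .
      qed
      have "agree 1 h (\<lambda>x. x @ x)"
        unfolding agree_def
      proof
        fix z :: "bool list" assume z: "z \<in> cube 1"
        then obtain b where zb: "z = [b]" by (auto simp: cube_def length_Suc_conv)
        have gz: "g z = ins z" using g(2) z by (simp add: agree_def)
        have "ins z \<in> {x, y}" using zb insF insT by (cases b) auto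
        then have fz: "f (ins z) \<in> cube n" using fxn by auto
        have "h z = p (h1 z)" using h(2) z by (simp add: agree_def)
        also have "\<dots> = p (f (ins z))" using h1(2) z gz by (simp add: agree_def)
        also have "\<dots> = [f (ins z) ! i, f (ins z) ! j]" using p(2) p0(2) fz by (simp add: agree_def)
        also have "\<dots> = z @ z" using zb insF insT fv by (cases b) auto
        finally show "h z = z @ z" .
      qed
      with h(1) N show False by blast
    qed
  qed
qed

end
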